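(* Let $(X_{s,t})$ be the INMA$(q_1,q_2)$ random field defined in the context, and let $k,l$ be integers with $0\le k\le q_1$, $0\le l\le q_2$. Then for all $(s,t)\in\mathbb{Z}^2$ and $u_1,u_2\in[-1,1]$, the bivariate pgf $\operatorname{pgf}(u_1,u_2;k,l):=\mathbb{E}\big(u_1^{X_{s,t}}u_2^{X_{s-k,t-l}}\big)$ equals $$\prod_{i=0}^{k-1}\prod_{j=0}^{q_2}\operatorname{pgf}_\varepsilon\big(1+\beta_{ij}(u_1-1)\big)\cdot\prod_{i=k}^{q_1}\prod_{j=0}^{l-1}\operatorname{pgf}_\varepsilon\big(1+\beta_{ij}(u_1-1)\big)$$ $$\cdot\prod_{i=q_1+1}^{q_1+k}\prod_{j=l}^{q_2+l}\operatorname{pgf}_\varepsilon\big(1+\beta_{i-k,j-l}(u_2-1)\big)\cdot\prod_{i=k}^{q_1}\prod_{j=q_2+1}^{q_2+l}\operatorname{pgf}_\varepsilon\big(1+\beta_{i-k,j-l}(u_2-1)\big)$$ $$\cdot\prod_{i=k}^{q_1}\prod_{j=l}^{q_2}\operatorname{pgf}_\varepsilon\Big(1+\beta_{ij}(u_1-1)+\beta_{i-k,j-l}(u_2-1)+p_{(i,j),(i-k,j-l)}\,(u_1-1)(u_2-1)\Big),$$ where empty products equal $1$. (For $k=l=0$ this reduces to the marginal pgf of $X_{s,t}$ evaluated at $u=u_1u_2$.)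
   Context: INMA$(q_1,q_2)$ random field: Fix $q_1,q_2\in\mathbb{N}_0$ with $q_1+q_2\ge 1$ and parameters $\beta_{ij}\in[0,1]$ for $0\le i\le q_1$, $0\le j\le q_2$; put $\beta_\bullet=\sum_{i=0}^{q_1}\sum_{j=0}^{q_2}\beta_{ij}$. Let $(\varepsilon_{s,t})_{s,t\in\mathbb{Z}}$ be i.i.d. random variables with values in $\mathbb{N}_0=\{0,1,2,\dots\}$, finite mean $\mu_\varepsilon$ and finite variance $\sigma_\varepsilon^2$, and let $\operatorname{pgf}_\varepsilon(u)=\mathbb{E}u^{\varepsilon_{s,t}}$. Let $\mathbf{Z}_{s,t;r}=(Z^{(i,j)}_{s,t;r})_{0\le i\le q_1,0\le j\le q_2}$, $s,t\in\mathbb{Z}$, $r\in\mathbb{N}$, be i.i.d. random vectors (distributed as a generic vector $\mathbf{Z}=(Z^{(i,j)})$), independent of $(\varepsilon_{s,t})$, whose components are Bernoulli with $\mathbb{P}(Z^{(i,j)}=1)=\beta_{ij}$; the components within one vector may be arbitrarily dependent. Write $p_{(i,j),(i',j')}:=\mathbb{P}(Z^{(i,j)}=1,\,Z^{(i',j')}=1)$. The binomial thinning of $\varepsilon_{s,t}$ executed at location $(s+i,t+j)$ is $\beta_{ij}\circ_{s+i,t+j}\varepsilon_{s,t}:=\sum_{r=1}^{\varepsilon_{s,t}}Z^{(i,j)}_{s,t;r}$ (empty sum $=0$). The field is $$X_{s,t}=\sum_{i=0}^{q_1}\sum_{j=0}^{q_2}\beta_{ij}\circ_{s,t}\varepsilon_{s-i,t-j}=\sum_{i=0}^{q_1}\sum_{j=0}^{q_2}\sum_{r=1}^{\varepsilon_{s-i,t-j}}Z^{(i,j)}_{s-i,t-j;r}.$$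 *)

theory Defs
  imports "HOL-Probability.Probability"
begin

text \<open>The INMA(q1,q2) field. eps s t is the innovation at (s,t); Z s t r (i,j) is the
 (i,j)-component of the r-th Bernoulli vector attached to site (s,t).
 The thinning beta_ij o_(s+i,t+j) eps_(s,t) is the sum of Z s t r (i,j) for r = 1..eps s t.\<close>

definition thinning :: "(int \<Rightarrow> int \<Rightarrow> nat \<Rightarrow> nat \<times> nat \<Rightarrow> 'a \<Rightarrow> nat)
    \<Rightarrow> int \<Rightarrow> int \<Rightarrow> nat \<Rightarrow> nat \<Rightarrow> nat \<Rightarrow> 'a \<Rightarrow> nat" where
  "thinning Z s t i j n \<omega> = (\<Sum>r\<in>{1..n}. Z s t r (i, j) \<omega>)"

definition INMA_field :: "nat \<Rightarrow> nat \<Rightarrow> (int \<Rightarrow> int \<Rightarrow> 'a \<Rightarrow> nat)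
    \<Rightarrow> (int \<Rightarrow> int \<Rightarrow> nat \<Rightarrow> nat \<times> nat \<Rightarrow> 'a \<Rightarrow> nat) \<Rightarrow> int \<Rightarrow> int \<Rightarrow> 'a \<Rightarrow> nat" where
  "INMA_field q1 q2 eps Z s t \<omega> =
     (\<Sum>i\<le>q1. \<Sum>j\<le>q2. thinning Z (s - int i) (t - int j) i j (eps (s - int i) (t - int j) \<omega>) \<omega>)"

definition Zvec :: "nat \<Rightarrow> nat \<Rightarrow> (int \<Rightarrow> int \<Rightarrow> nat \<Rightarrow> nat \<times> nat \<Rightarrow> 'a \<Rightarrow> nat)
    \<Rightarrow> int \<Rightarrow> int \<Rightarrow> nat \<Rightarrow> 'a \<Rightarrow> (nat \<times> nat \<Rightarrow> nat)" where
  "Zvec q1 q2 Z s t r \<omega> = restrict (\<lambda>ij. Z s t r ij \<omega>) ({..q1} \<times> {..q2})"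

definition pgf :: "'a measure \<Rightarrow> ('a \<Rightarrow> nat) \<Rightarrow> real \<Rightarrow> real" where
  "pgf M Y u = (\<integral>\<omega>. u ^ Y \<omega> \<partial>M)"

text \<open>Generator of the independence structure: the sigma-algebras generated by the
 innovations eps_{s,t} (index Inl (s,t)) and by the vectors Z_{s,t;r} (index Inr (s,t,r)).\<close>
definition INMA_sigmas :: "'a measure \<Rightarrow> nat \<Rightarrow> nat \<Rightarrow> (int \<Rightarrow> int \<Rightarrow> 'a \<Rightarrow> nat)
    \<Rightarrow> (int \<Rightarrow> int \<Rightarrow> nat \<Rightarrow> nat \<times> nat \<Rightarrow> 'a \<Rightarrow> nat)
    \<Rightarrow> (int \<times> int + int \<times> int \<times> nat) \<Rightarrow> 'a set set" where
  "INMA_sigmas M q1 q2 eps Z idx = (case idx of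
      Inl (s, t) \<Rightarrow> {eps s t -` A \<inter> space M | A. True}
    | Inr (s, t, r) \<Rightarrow> {Zvec q1 q2 Z s t r -` B \<inter> space M | B. True})"

end

theory Submission imports Defs begin

lemma prodJ:
  fixes \<Phi> :: "int \<times> int + int \<times> int \<times> nat \<Rightarrow> real"
  assumes fin: "finite S"
  shows "(\<Prod>j\<in>Inl ` S \<union> (\<lambda>(\<sigma>, r). Inr (fst \<sigma>, snd \<sigma>, r)) ` Sigma S (\<lambda>\<sigma>. {1..n \<sigma>}). \<Phi> j)
     = (\<Prod>\<sigma>\<in>S. \<Phi> (Inl \<sigma>)) * (\<Prod>\<sigma>\<in>S. \<Prod>r\<in>{1..n \<sigma>}. \<Phi> (Inr (fst \<sigma>, snd \<sigma>, r)))"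
proof -
  have inj: "inj_on (\<lambda>(\<sigma>::int\<times>int, r::nat). Inr (fst \<sigma>, snd \<sigma>, r) :: int \<times> int + int \<times> int \<times> nat) X" for X
    by (auto simp: inj_on_def)
  have "(\<Prod>j\<in>Inl ` S \<union> (\<lambda>(\<sigma>, r). Inr (fst \<sigma>, snd \<sigma>, r)) ` Sigma S (\<lambda>\<sigma>. {1..n \<sigma>}). \<Phi> j)
     = (\<Prod>j\<in>Inl ` S. \<Phi> j) * (\<Prod>j\<in>(\<lambda>(\<sigma>, r). Inr (fst \<sigma>, snd \<sigma>, r)) ` Sigma S (\<lambda>\<sigma>. {1..n \<sigma>}). \<Phi> j)"
    by (rule prod.union_disjoint) (use fin in auto)
  also have "(\<Prod>j\<in>Inl ` S. \<Phi> j) = (\<Prod>\<sigma>\<in>S. \<Phi> (Inl \<sigma>))"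
    by (subst prod.reindex) auto
  also have "(\<Prod>j\<in>(\<lambda>(\<sigma>, r). Inr (fst \<sigma>, snd \<sigma>, r)) ` Sigma S (\<lambda>\<sigma>. {1..n \<sigma>}). \<Phi> j)
      = (\<Prod>(\<sigma>,r)\<in>Sigma S (\<lambda>\<sigma>. {1..n \<sigma>}). \<Phi> (Inr (fst \<sigma>, snd \<sigma>, r)))"
    by (subst prod.reindex[OF inj]) (simp add: case_prod_unfold)
  also have "\<dots> = (\<Prod>\<sigma>\<in>S. \<Prod>r\<in>{1..n \<sigma>}. \<Phi> (Inr (fst \<sigma>, snd \<sigma>, r)))"
    by (rule prod.Sigma[symmetric]) (use fin in auto)
  finally show ?thesis .
qed

lemma abs_prod_le1:
  fixes g :: "'b \<Rightarrow> real"
  assumes "\<And>x. x \<in> A \<Longrightarrow> \<bar>g x\<bar> \<le> 1"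
  shows "\<bar>\<Prod>x\<in>A. g x\<bar> \<le> 1"
  unfolding abs_prod by (rule prod_le_1) (use assms in auto)


lemma (in prob_space) L1:
  fixes F :: "'i \<Rightarrow> 'a \<Rightarrow> real"
  assumes ind: "indep_sets G I" and fin: "finite J" and JI: "J \<subseteq> I"
    and meas: "\<And>j. j \<in> J \<Longrightarrow> F j \<in> borel_measurable M"
    and pre: "\<And>j B. j \<in> J \<Longrightarrow> B \<in> sets borel \<Longrightarrow> F j -` B \<inter> space M \<in> G j"
    and bd: "\<And>j \<omega>. j \<in> J \<Longrightarrow> \<omega> \<in> space M \<Longrightarrow> \<bar>F j \<omega>\<bar> \<le> 1"
  shows "(\<integral>\<omega>. (\<Prod>j\<in>J. F j \<omega>) \<partial>M) = (\<Prod>j\<in>J. \<integral>\<omega>. F j \<omega> \<partial>M)"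
proof (rule indep_vars_lebesgue_integral[OF fin])
  show "indep_vars (\<lambda>_. borel) F J"
    unfolding indep_vars_def2
  proof
    show "\<forall>i\<in>J. random_variable borel (F i)" using meas by auto
    show "indep_sets (\<lambda>i. {F i -` A \<inter> space M |A. A \<in> sets borel}) J"
      by (rule indep_sets_mono[OF ind JI]) (auto intro: pre)
  qed
  fix j assume "j \<in> J"
  then show "integrable M (F j)"
    using meas bd by (intro integrable_const_bound[where B=1]) auto
qed


lemma (in prob_space) int_ifeq:
  assumes E: "E \<in> measurable M (count_space UNIV)"
  shows "(\<integral>\<omega>. (if E \<omega> = (m::nat) then x else 0) \<partial>M) = prob {\<omega>\<in>space M. E \<omega> = m} * (x::real)"
proof -
  have ev: "{\<omega>\<in>space M. E \<omega> = m} \<in> events" using E by measurable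
  have "(\<integral>\<omega>. (if E \<omega> = (m::nat) then x else 0) \<partial>M) = (\<integral>\<omega>. indicator {\<omega>\<in>space M. E \<omega> = m} \<omega> * x \<partial>M)"
    by (rule Bochner_Integration.integral_cong) (auto simp: indicator_def)
  also have "\<dots> = prob {\<omega>\<in>space M. E \<omega> = m} * x"
    using ev by simp
  finally show ?thesis .
qed

lemma (in prob_space) L3:
  assumes E: "E \<in> measurable M (count_space UNIV)" and c: "\<bar>c\<bar> \<le> (1::real)"
  shows "(\<lambda>N. \<Sum>m<N. prob {\<omega>\<in>space M. E \<omega> = m} * c ^ m) \<longlonglongrightarrow> (\<integral>\<omega>. c ^ E \<omega> \<partial>M)"
proof -
  have eq: "(\<Sum>m<N. prob {\<omega>\<in>space M. E \<omega> = m} * c ^ m) = (\<integral>\<omega>. (\<Sum>m<N. if E \<omega> = m then c ^ m else 0) \<partial>M)" for N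
  proof -
    have "(\<integral>\<omega>. (\<Sum>m<N. if E \<omega> = m then c ^ m else 0) \<partial>M) = (\<Sum>m<N. \<integral>\<omega>. (if E \<omega> = m then c ^ m else 0) \<partial>M)"
      by (rule Bochner_Integration.integral_sum) (intro integrable_const_bound[where B="\<bar>c ^ m\<bar>" for m] AE_I2, auto, use E in measurable)
    then show ?thesis by (simp add: int_ifeq[OF E])
  qed
  have bd: "\<bar>c ^ n\<bar> \<le> 1" for n using c by (simp add: power_abs power_le_one)
  show ?thesis unfolding eq
  proof (rule integral_dominated_convergence[where w="\<lambda>_. 1"])
    show "(\<lambda>\<omega>. c ^ E \<omega>) \<in> borel_measurable M" using E by measurable
    show "(\<lambda>\<omega>. \<Sum>m<N. if E \<omega> = m then c ^ m else 0) \<in> borel_measurable M" for N using E by measurable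
    show "integrable M (\<lambda>_. 1::real)" by simp
    show "AE \<omega> in M. (\<lambda>N. \<Sum>m<N. if E \<omega> = m then c ^ m else 0) \<longlonglongrightarrow> c ^ E \<omega>"
    proof (rule AE_I2, rule tendsto_eventually)
      fix \<omega> show "\<forall>\<^sub>F N in sequentially. (\<Sum>m<N. if E \<omega> = m then c ^ m else 0) = c ^ E \<omega>"
        using eventually_ge_at_top[of "Suc (E \<omega>)"] by eventually_elim (simp add: sum.delta)
    qed
    show "AE \<omega> in M. norm (\<Sum>m<N. if E \<omega> = m then c ^ m else 0) \<le> 1" for N
      by (rule AE_I2) (simp add: sum.delta bd)
  qed
qed

lemma (in prob_space) L2:
  fixes G :: "int \<times> int + int \<times> int \<times> nat \<Rightarrow> 'a set set"
    and E :: "int \<times> int \<Rightarrow> 'a \<Rightarrow> nat" and Y :: "int \<times> int \<Rightarrow> nat \<Rightarrow> 'a \<Rightarrow> real"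
    and c :: "int \<times> int \<Rightarrow> real"
  assumes ind: "indep_sets G (range Inl \<union> Inr ` {(a, b, r). r \<ge> 1})"
    and fin: "finite S"
    and E_meas: "\<And>\<sigma>. E \<sigma> \<in> measurable M (count_space UNIV)"
    and E_G: "\<And>\<sigma> A. E \<sigma> -` A \<inter> space M \<in> G (Inl \<sigma>)"
    and Y_meas: "\<And>\<sigma> r. r \<ge> 1 \<Longrightarrow> Y \<sigma> r \<in> borel_measurable M"
    and Y_G: "\<And>\<sigma> r B. r \<ge> 1 \<Longrightarrow> Y \<sigma> r -` B \<inter> space M \<in> G (Inr (fst \<sigma>, snd \<sigma>, r))"
    and Y_bd: "\<And>\<sigma> r \<omega>. \<omega> \<in> space M \<Longrightarrow> \<bar>Y \<sigma> r \<omega>\<bar> \<le> 1"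
    and Y_int: "\<And>\<sigma> r. \<sigma> \<in> S \<Longrightarrow> r \<ge> 1 \<Longrightarrow> (\<integral>\<omega>. Y \<sigma> r \<omega> \<partial>M) = c \<sigma>"
    and E0: "E0 \<in> measurable M (count_space UNIV)"
    and E_dist: "\<And>\<sigma> m. prob {\<omega>\<in>space M. E \<sigma> \<omega> = m} = prob {\<omega>\<in>space M. E0 \<omega> = m}"
  shows "(\<integral>\<omega>. (\<Prod>\<sigma>\<in>S. \<Prod>r\<in>{1..E \<sigma> \<omega>}. Y \<sigma> r \<omega>) \<partial>M) = (\<Prod>\<sigma>\<in>S. \<integral>\<omega>. c \<sigma> ^ E0 \<omega> \<partial>M)"
proof -
  have c_bd: "\<bar>c \<sigma>\<bar> \<le> 1" if "\<sigma> \<in> S" for \<sigma>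
  proof -
    have "\<bar>\<integral>\<omega>. Y \<sigma> 1 \<omega> \<partial>M\<bar> \<le> 1"
    proof -
      have i: "integrable M (Y \<sigma> 1)"
        using Y_meas[of 1 \<sigma>] Y_bd by (intro integrable_const_bound[where B=1]) auto
      have "(\<integral>\<omega>. norm (Y \<sigma> 1 \<omega>) \<partial>M) \<le> 1"
        by (rule integral_le_const) (use i Y_bd in auto)
      then show ?thesis using integral_norm_bound[of M "Y \<sigma> 1"] unfolding real_norm_def by linarith
    qed
    then show ?thesis using Y_int[OF that, of 1] by simp
  qed
  have Yp_meas: "(\<lambda>\<omega>. \<Prod>r\<in>{1..m}. Y \<sigma> r \<omega>) \<in> borel_measurable M" for \<sigma> m
    by (intro borel_measurable_prod) (auto intro: Y_meas)
  have Yp_bd: "\<bar>\<Prod>r\<in>{1..m}. Y \<sigma> r \<omega>\<bar> \<le> 1" if "\<omega> \<in> space M" for \<sigma> m \<omega>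
    by (rule abs_prod_le1) (use Y_bd that in auto)
  define T where "T N \<omega> = (\<Prod>\<sigma>\<in>S. \<Sum>m<N. if E \<sigma> \<omega> = m then (\<Prod>r\<in>{1..m}. Y \<sigma> r \<omega>) else 0)" for N \<omega>
  define f where "f \<omega> = (\<Prod>\<sigma>\<in>S. \<Prod>r\<in>{1..E \<sigma> \<omega>}. Y \<sigma> r \<omega>)" for \<omega>
  have T_alt: "T N \<omega> = (\<Prod>\<sigma>\<in>S. if E \<sigma> \<omega> < N then (\<Prod>r\<in>{1..E \<sigma> \<omega>}. Y \<sigma> r \<omega>) else 0)" for N \<omega>
    unfolding T_def by (simp add: sum.delta sum.delta')
  have f_meas: "f \<in> borel_measurable M"
    unfolding f_def
  proof (intro borel_measurable_prod)
    fix \<sigma> show "(\<lambda>\<omega>. \<Prod>r\<in>{1..E \<sigma> \<omega>}. Y \<sigma> r \<omega>) \<in> borel_measurable M"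
      by (rule measurable_compose_countable'[where f="\<lambda>m \<omega>. \<Prod>r\<in>{1..m}. Y \<sigma> r \<omega>" and g="E \<sigma>" and I=UNIV])
        (rule Yp_meas, rule E_meas, simp)
  qed
  have T_meas: "T N \<in> borel_measurable M" for N
    unfolding T_def
  proof (intro borel_measurable_prod borel_measurable_sum)
    fix \<sigma> m
    have ev: "{\<omega> \<in> space M. E \<sigma> \<omega> = m} \<in> sets M" using E_meas[of \<sigma>] by measurable
    show "(\<lambda>\<omega>. if E \<sigma> \<omega> = m then (\<Prod>r\<in>{1..m}. Y \<sigma> r \<omega>) else 0) \<in> borel_measurable M"
      by (rule measurable_If, rule Yp_meas, simp, rule ev)
  qed
  have T_bd: "\<bar>T N \<omega>\<bar> \<le> 1" if "\<omega> \<in> space M" for N \<omega>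
    unfolding T_alt by (rule abs_prod_le1) (use Yp_bd that in auto)
  have lim1: "(\<lambda>N. \<integral>\<omega>. T N \<omega> \<partial>M) \<longlonglongrightarrow> (\<integral>\<omega>. f \<omega> \<partial>M)"
  proof (rule integral_dominated_convergence[where w="\<lambda>_. 1"])
    show "f \<in> borel_measurable M" by (rule f_meas)
    show "T N \<in> borel_measurable M" for N by (rule T_meas)
    show "integrable M (\<lambda>_. 1::real)" by simp
    show "AE \<omega> in M. norm (T N \<omega>) \<le> 1" for N using T_bd by auto
    show "AE \<omega> in M. (\<lambda>N. T N \<omega>) \<longlonglongrightarrow> f \<omega>"
    proof (rule AE_I2)
      fix \<omega>
      show "(\<lambda>N. T N \<omega>) \<longlonglongrightarrow> f \<omega>"
        unfolding T_alt f_def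
      proof (rule tendsto_prod)
        fix \<sigma> show "(\<lambda>N. if E \<sigma> \<omega> < N then (\<Prod>r\<in>{1..E \<sigma> \<omega>}. Y \<sigma> r \<omega>) else 0) \<longlonglongrightarrow> (\<Prod>r\<in>{1..E \<sigma> \<omega>}. Y \<sigma> r \<omega>)"
          by (rule tendsto_eventually) (use eventually_ge_at_top[of "Suc (E \<sigma> \<omega>)"] in \<open>eventually_elim, simp\<close>)
      qed
    qed
  qed
  have eqN: "(\<integral>\<omega>. T N \<omega> \<partial>M) = (\<Prod>\<sigma>\<in>S. \<Sum>m<N. prob {\<omega>\<in>space M. E0 \<omega> = m} * c \<sigma> ^ m)" for N
  proof -
    define PS where "PS = PiE S (\<lambda>_. {..<N})"
    define H where "H n \<omega> = (\<Prod>\<sigma>\<in>S. if E \<sigma> \<omega> = n \<sigma> then (\<Prod>r\<in>{1..n \<sigma>}. Y \<sigma> r \<omega>) else 0)" for n \<omega>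
    have finPS: "finite PS" unfolding PS_def using fin by (simp add: finite_PiE)
    have 1: "T N \<omega> = (\<Sum>n\<in>PS. H n \<omega>)" for \<omega>
      unfolding T_def PS_def H_def by (rule prod_sum_PiE) (use fin in auto)
    have H_meas: "H n \<in> borel_measurable M" for n
      unfolding H_def
    proof (intro borel_measurable_prod)
      fix \<sigma>
      have ev: "{\<omega> \<in> space M. E \<sigma> \<omega> = n \<sigma>} \<in> sets M" using E_meas[of \<sigma>] by measurable
      show "(\<lambda>\<omega>. if E \<sigma> \<omega> = n \<sigma> then (\<Prod>r\<in>{1..n \<sigma>}. Y \<sigma> r \<omega>) else 0) \<in> borel_measurable M"
        by (rule measurable_If, rule Yp_meas, simp, rule ev)
    qed
    have H_bd: "\<bar>H n \<omega>\<bar> \<le> 1" if "\<omega> \<in> space M" for n \<omega>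
      unfolding H_def by (rule abs_prod_le1) (use Yp_bd that in auto)
    have 2: "(\<integral>\<omega>. H n \<omega> \<partial>M) = (\<Prod>\<sigma>\<in>S. prob {\<omega>\<in>space M. E \<sigma> \<omega> = n \<sigma>} * c \<sigma> ^ n \<sigma>)" for n
    proof -
      define F :: "int \<times> int + int \<times> int \<times> nat \<Rightarrow> 'a \<Rightarrow> real"
        where "F j \<omega> = (case j of Inl \<sigma> \<Rightarrow> if E \<sigma> \<omega> = n \<sigma> then 1 else 0 | Inr (a, b, r) \<Rightarrow> Y (a, b) r \<omega>)" for j \<omega>
      define J where "J = Inl ` S \<union> (\<lambda>(\<sigma>, r). Inr (fst \<sigma>, snd \<sigma>, r)) ` Sigma S (\<lambda>\<sigma>. {1..n \<sigma>})"
      have a: "H n \<omega> = (\<Prod>j\<in>J. F j \<omega>)" for \<omega>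
        unfolding J_def prodJ[OF fin] F_def H_def
        by (simp add: prod.distrib[symmetric]) (intro prod.cong, auto)
      have b: "(\<integral>\<omega>. (\<Prod>j\<in>J. F j \<omega>) \<partial>M) = (\<Prod>j\<in>J. \<integral>\<omega>. F j \<omega> \<partial>M)"
      proof (rule L1[OF ind])
        show "finite J" unfolding J_def using fin by auto
        show "J \<subseteq> range Inl \<union> Inr ` {(a, b, r). r \<ge> 1}" unfolding J_def by force
        show "F j \<in> borel_measurable M" if "j \<in> J" for j
        proof (cases j)
          case (Inl \<sigma>)
          have ev: "{\<omega> \<in> space M. E \<sigma> \<omega> = n \<sigma>} \<in> sets M" using E_meas[of \<sigma>] by measurable
          show ?thesis unfolding Inl F_def by (simp, rule measurable_If, simp, simp, rule ev)
        next
          case (Inr x)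
          then obtain a b r where x: "x = (a, b, r)" by (cases x) auto
          have "r \<ge> 1" using that Inr x unfolding J_def by auto
          then show ?thesis unfolding Inr x F_def by (simp add: Y_meas)
        qed
        show "F j -` B \<inter> space M \<in> G j" if "j \<in> J" "B \<in> sets borel" for j B
        proof (cases j)
          case (Inl \<sigma>)
          have eq: "F (Inl \<sigma>) -` B \<inter> space M = E \<sigma> -` {m. (if m = n \<sigma> then 1 else 0) \<in> B} \<inter> space M"
            unfolding F_def by auto
          show ?thesis unfolding Inl eq by (rule E_G)
        next
          case (Inr x)
          then obtain a b r where x: "x = (a, b, r)" by (cases x) auto
          have "r \<ge> 1" using that Inr x unfolding J_def by auto
          then show ?thesis using Y_G[of r "(a, b)" B] unfolding Inr x F_def by simp
        qed
        show "\<bar>F j \<omega>\<bar> \<le> 1" if "j \<in> J" "\<omega> \<in> space M" for j \<omega>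
          using Y_bd[OF that(2)] unfolding F_def by (auto split: sum.split prod.split)
      qed
      have c: "(\<Prod>j\<in>J. \<integral>\<omega>. F j \<omega> \<partial>M) = (\<Prod>\<sigma>\<in>S. prob {\<omega>\<in>space M. E \<sigma> \<omega> = n \<sigma>} * c \<sigma> ^ n \<sigma>)"
      proof -
        have "(\<Prod>j\<in>J. \<integral>\<omega>. F j \<omega> \<partial>M) = (\<Prod>\<sigma>\<in>S. prob {\<omega>\<in>space M. E \<sigma> \<omega> = n \<sigma>}) * (\<Prod>\<sigma>\<in>S. \<Prod>r\<in>{1..n \<sigma>}. c \<sigma>)"
          unfolding J_def prodJ[OF fin] F_def
          using int_ifeq[OF E_meas, of _ "n _" 1]
          by (intro arg_cong2[where f="(*)"] prod.cong refl) (auto simp: Y_int)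
        then show ?thesis by (simp add: prod.distrib)
      qed
      show ?thesis using a b c by simp
    qed
    have "(\<integral>\<omega>. T N \<omega> \<partial>M) = (\<Sum>n\<in>PS. \<integral>\<omega>. H n \<omega> \<partial>M)"
      unfolding 1
      by (rule Bochner_Integration.integral_sum)
        (intro integrable_const_bound[where B=1] AE_I2 H_meas, use H_bd in auto)
    also have "\<dots> = (\<Sum>n\<in>PS. \<Prod>\<sigma>\<in>S. prob {\<omega>\<in>space M. E \<sigma> \<omega> = n \<sigma>} * c \<sigma> ^ n \<sigma>)"
      by (simp add: 2)
    also have "\<dots> = (\<Prod>\<sigma>\<in>S. \<Sum>m<N. prob {\<omega>\<in>space M. E \<sigma> \<omega> = m} * c \<sigma> ^ m)"
      unfolding PS_def by (rule prod_sum_PiE[symmetric]) (use fin in auto)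
    finally show ?thesis by (simp add: E_dist)
  qed
  have lim2: "(\<lambda>N. \<Prod>\<sigma>\<in>S. \<Sum>m<N. prob {\<omega>\<in>space M. E0 \<omega> = m} * c \<sigma> ^ m) \<longlonglongrightarrow> (\<Prod>\<sigma>\<in>S. \<integral>\<omega>. c \<sigma> ^ E0 \<omega> \<partial>M)"
    by (intro tendsto_prod L3[OF E0] c_bd)
  show ?thesis
    using LIMSEQ_unique[OF lim1[unfolded eqN] lim2] unfolding f_def .
qed


definition ccf :: "nat \<Rightarrow> nat \<Rightarrow> nat \<Rightarrow> nat \<Rightarrow> (nat \<Rightarrow> nat \<Rightarrow> real) \<Rightarrow> (nat \<Rightarrow> nat \<Rightarrow> nat \<Rightarrow> nat \<Rightarrow> real)
   \<Rightarrow> real \<Rightarrow> real \<Rightarrow> nat \<times> nat \<Rightarrow> real" where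
  "ccf q1 q2 k l beta pp u1 u2 \<kappa> =
    (if \<kappa> \<in> {..q1} \<times> {..q2} \<and> \<kappa> \<in> {k..q1+k} \<times> {l..q2+l} then
       1 + beta (fst \<kappa>) (snd \<kappa>) * (u1 - 1) + beta (fst \<kappa> - k) (snd \<kappa> - l) * (u2 - 1)
         + pp (fst \<kappa>) (snd \<kappa>) (fst \<kappa> - k) (snd \<kappa> - l) * (u1 - 1) * (u2 - 1)
     else if \<kappa> \<in> {..q1} \<times> {..q2} then 1 + beta (fst \<kappa>) (snd \<kappa>) * (u1 - 1)
     else if \<kappa> \<in> {k..q1+k} \<times> {l..q2+l} then 1 + beta (fst \<kappa> - k) (snd \<kappa> - l) * (u2 - 1)
     else 1)"

lemma prod_cart: "(\<Prod>i\<in>A. \<Prod>j\<in>B. f i j) = (\<Prod>\<kappa>\<in>A \<times> B. f (fst \<kappa>) (snd \<kappa>))"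
  by (simp add: prod.cartesian_product case_prod_unfold)

lemma final_prod:
  fixes P :: "real \<Rightarrow> real"
  assumes kl: "k \<le> q1" "l \<le> q2"
  shows "(\<Prod>\<kappa>\<in>({..q1} \<times> {..q2}) \<union> ({k..q1+k} \<times> {l..q2+l}). P (ccf q1 q2 k l beta pp u1 u2 \<kappa>)) =
      (\<Prod>i\<in>{0..<k}. \<Prod>j\<in>{0..q2}. P (1 + beta i j * (u1 - 1)))
      * (\<Prod>i\<in>{k..q1}. \<Prod>j\<in>{0..<l}. P (1 + beta i j * (u1 - 1)))
      * (\<Prod>i\<in>{q1+1..q1+k}. \<Prod>j\<in>{l..q2+l}. P (1 + beta (i - k) (j - l) * (u2 - 1)))
      * (\<Prod>i\<in>{k..q1}. \<Prod>j\<in>{q2+1..q2+l}. P (1 + beta (i - k) (j - l) * (u2 - 1)))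
      * (\<Prod>i\<in>{k..q1}. \<Prod>j\<in>{l..q2}.
           P (1 + beta i j * (u1 - 1) + beta (i - k) (j - l) * (u2 - 1)
                + pp i j (i - k) (j - l) * (u1 - 1) * (u2 - 1)))"
proof -
  define R1 where "R1 = {0..<k} \<times> {0..q2}"
  define R2 where "R2 = {k..q1} \<times> {0..<l}"
  define R3 where "R3 = {q1+1..q1+k} \<times> {l..q2+l}"
  define R4 where "R4 = {k..q1} \<times> {q2+1..q2+l}"
  define R5 where "R5 = {k..q1} \<times> {l..q2}"
  let ?h = "\<lambda>\<kappa>. P (ccf q1 q2 k l beta pp u1 u2 \<kappa>)"
  have D: "({..q1} \<times> {..q2}) \<union> ({k..q1+k} \<times> {l..q2+l}) = R1 \<union> R2 \<union> R3 \<union> R4 \<union> R5"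
    unfolding R1_def R2_def R3_def R4_def R5_def using kl by auto
  have fin: "finite R1" "finite R2" "finite R3" "finite R4" "finite R5"
    unfolding R1_def R2_def R3_def R4_def R5_def by auto
  have "(\<Prod>\<kappa>\<in>R1 \<union> R2 \<union> R3 \<union> R4 \<union> R5. ?h \<kappa>)
     = (\<Prod>\<kappa>\<in>R1. ?h \<kappa>) * (\<Prod>\<kappa>\<in>R2. ?h \<kappa>) * (\<Prod>\<kappa>\<in>R3. ?h \<kappa>) * (\<Prod>\<kappa>\<in>R4. ?h \<kappa>) * (\<Prod>\<kappa>\<in>R5. ?h \<kappa>)"
  proof -
    have u: "\<And>A B. finite A \<Longrightarrow> finite B \<Longrightarrow> A \<inter> B = {} \<Longrightarrow> prod ?h (A \<union> B) = prod ?h A * prod ?h B"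
      by (rule prod.union_disjoint)
    have d1: "R1 \<inter> R2 = {}" "(R1 \<union> R2) \<inter> R3 = {}" "(R1 \<union> R2 \<union> R3) \<inter> R4 = {}"
      "(R1 \<union> R2 \<union> R3 \<union> R4) \<inter> R5 = {}"
      unfolding R1_def R2_def R3_def R4_def R5_def using kl by auto
    show ?thesis using fin d1 by (simp add: u)
  qed
  also have "(\<Prod>\<kappa>\<in>R1. ?h \<kappa>) = (\<Prod>i\<in>{0..<k}. \<Prod>j\<in>{0..q2}. P (1 + beta i j * (u1 - 1)))"
    unfolding prod_cart R1_def using kl by (intro prod.cong refl) (auto simp: ccf_def)
  also have "(\<Prod>\<kappa>\<in>R2. ?h \<kappa>) = (\<Prod>i\<in>{k..q1}. \<Prod>j\<in>{0..<l}. P (1 + beta i j * (u1 - 1)))"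
    unfolding prod_cart R2_def using kl by (intro prod.cong refl) (auto simp: ccf_def)
  also have "(\<Prod>\<kappa>\<in>R3. ?h \<kappa>) = (\<Prod>i\<in>{q1+1..q1+k}. \<Prod>j\<in>{l..q2+l}. P (1 + beta (i - k) (j - l) * (u2 - 1)))"
    unfolding prod_cart R3_def using kl by (intro prod.cong refl) (auto simp: ccf_def)
  also have "(\<Prod>\<kappa>\<in>R4. ?h \<kappa>) = (\<Prod>i\<in>{k..q1}. \<Prod>j\<in>{q2+1..q2+l}. P (1 + beta (i - k) (j - l) * (u2 - 1)))"
    unfolding prod_cart R4_def using kl by (intro prod.cong refl) (auto simp: ccf_def)
  also have "(\<Prod>\<kappa>\<in>R5. ?h \<kappa>) = (\<Prod>i\<in>{k..q1}. \<Prod>j\<in>{l..q2}.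
           P (1 + beta i j * (u1 - 1) + beta (i - k) (j - l) * (u2 - 1)
                + pp i j (i - k) (j - l) * (u1 - 1) * (u2 - 1)))"
    unfolding prod_cart R5_def using kl by (intro prod.cong refl) (auto simp: ccf_def)
  finally show ?thesis unfolding D .
qed

theorem theorem1:
  fixes M :: "'a measure" and q1 q2 k l :: nat and beta :: "nat \<Rightarrow> nat \<Rightarrow> real"
    and eps :: "int \<Rightarrow> int \<Rightarrow> 'a \<Rightarrow> nat"
    and Z :: "int \<Rightarrow> int \<Rightarrow> nat \<Rightarrow> nat \<times> nat \<Rightarrow> 'a \<Rightarrow> nat"
    and s t :: int and u1 u2 :: real
  assumes ps: "prob_space M"
    and q: "q1 + q2 \<ge> 1"
    and beta_range: "\<And>i j. i \<le> q1 \<Longrightarrow> j \<le> q2 \<Longrightarrow> 0 \<le> beta i j \<and> beta i j \<le> 1"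
    and eps_meas: "\<And>s t. eps s t \<in> measurable M (count_space UNIV)"
    and Z_meas: "\<And>s t r i j. Z s t r (i, j) \<in> measurable M (count_space UNIV)"
    and Z_01: "\<And>s t r i j \<omega>. \<omega> \<in> space M \<Longrightarrow> i \<le> q1 \<Longrightarrow> j \<le> q2 \<Longrightarrow> Z s t r (i, j) \<omega> \<in> {0, 1}"
    and Z_bern: "\<And>s t r i j. r \<ge> 1 \<Longrightarrow> i \<le> q1 \<Longrightarrow> j \<le> q2 \<Longrightarrow>
                   measure M {\<omega> \<in> space M. Z s t r (i, j) \<omega> = 1} = beta i j"
    and eps_ident: "\<And>s t A. measure M {\<omega> \<in> space M. eps s t \<omega> \<in> A}
                              = measure M {\<omega> \<in> space M. eps 0 0 \<omega> \<in> A}"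
    and Z_ident: "\<And>s t r B. r \<ge> 1 \<Longrightarrow> measure M {\<omega> \<in> space M. Zvec q1 q2 Z s t r \<omega> \<in> B}
                              = measure M {\<omega> \<in> space M. Zvec q1 q2 Z 0 0 1 \<omega> \<in> B}"
    and indep: "prob_space.indep_sets M (INMA_sigmas M q1 q2 eps Z)
                  (range Inl \<union> Inr ` {(s', t', r). r \<ge> 1})"
    and eps_mean: "integrable M (\<lambda>\<omega>. real (eps 0 0 \<omega>))"
    and eps_var: "integrable M (\<lambda>\<omega>. (real (eps 0 0 \<omega>))\<^sup>2)"
    and kl: "k \<le> q1" "l \<le> q2"
    and u: "-1 \<le> u1" "u1 \<le> 1" "-1 \<le> u2" "u2 \<le> 1"
  shows "(\<integral>\<omega>. u1 ^ INMA_field q1 q2 eps Z s t \<omega>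
               * u2 ^ INMA_field q1 q2 eps Z (s - int k) (t - int l) \<omega> \<partial>M) =
    (let P = pgf M (eps 0 0);
         p = (\<lambda>i j i' j'. measure M {\<omega> \<in> space M. Z 0 0 1 (i, j) \<omega> = 1 \<and> Z 0 0 1 (i', j') \<omega> = 1})
     in (\<Prod>i\<in>{0..<k}. \<Prod>j\<in>{0..q2}. P (1 + beta i j * (u1 - 1)))
      * (\<Prod>i\<in>{k..q1}. \<Prod>j\<in>{0..<l}. P (1 + beta i j * (u1 - 1)))
      * (\<Prod>i\<in>{q1+1..q1+k}. \<Prod>j\<in>{l..q2+l}. P (1 + beta (i - k) (j - l) * (u2 - 1)))
      * (\<Prod>i\<in>{k..q1}. \<Prod>j\<in>{q2+1..q2+l}. P (1 + beta (i - k) (j - l) * (u2 - 1)))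
      * (\<Prod>i\<in>{k..q1}. \<Prod>j\<in>{l..q2}.
           P (1 + beta i j * (u1 - 1) + beta (i - k) (j - l) * (u2 - 1)
                + p i j (i - k) (j - l) * (u1 - 1) * (u2 - 1))))"
  proof -
  interpret prob_space M by (rule ps)
  define D1 :: "(nat \<times> nat) set" where "D1 = {..q1} \<times> {..q2}"
  define D2 :: "(nat \<times> nat) set" where "D2 = {k..q1+k} \<times> {l..q2+l}"
  define D where "D = D1 \<union> D2"
  define \<phi> where "\<phi> \<kappa> = (s - int (fst \<kappa>), t - int (snd \<kappa>))" for \<kappa> :: "nat \<times> nat"
  define Gi where "Gi \<sigma> = (nat (s - fst \<sigma>), nat (t - snd \<sigma>))" for \<sigma> :: "int \<times> int"
  define gg where "gg \<kappa> z = (if \<kappa> \<in> D1 then u1 ^ z \<kappa> else 1) * (if \<kappa> \<in> D2 then u2 ^ z (fst \<kappa> - k, snd \<kappa> - l) else 1)"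
    for \<kappa> and z :: "nat \<times> nat \<Rightarrow> nat"
  define Y where "Y \<sigma> r \<omega> = gg (Gi \<sigma>) (Zvec q1 q2 Z (fst \<sigma>) (snd \<sigma>) r \<omega>)" for \<sigma> r \<omega>
  define E where "E \<sigma> = eps (fst \<sigma>) (snd \<sigma>)" for \<sigma>
  define pp where "pp = (\<lambda>i j i' j'. measure M {\<omega> \<in> space M. Z 0 0 1 (i, j) \<omega> = 1 \<and> Z 0 0 1 (i', j') \<omega> = 1})"
  define c where "c \<sigma> = ccf q1 q2 k l beta pp u1 u2 (Gi \<sigma>)" for \<sigma>
  have Gi_\<phi>[simp]: "Gi (\<phi> \<kappa>) = \<kappa>" for \<kappa> unfolding Gi_def \<phi>_def by simp
  have inj\<phi>: "inj_on \<phi> X" for X by (metis Gi_\<phi> inj_on_inverseI)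
  have finD: "finite D" unfolding D_def D1_def D2_def by auto
  have Z_meas'[measurable]: "Z a b r \<kappa> \<in> measurable M (count_space UNIV)" for a b r \<kappa>
    using Z_meas[of a b r "fst \<kappa>" "snd \<kappa>"] by simp
  have LHS: "u1 ^ INMA_field q1 q2 eps Z s t \<omega> * u2 ^ INMA_field q1 q2 eps Z (s - int k) (t - int l) \<omega>
      = (\<Prod>\<sigma>\<in>\<phi> ` D. \<Prod>r\<in>{1..E \<sigma> \<omega>}. Y \<sigma> r \<omega>)" if \<omega>: "\<omega> \<in> space M" for \<omega>
  proof -
    define ZZ where "ZZ \<kappa> r \<kappa>' = Z (fst (\<phi> \<kappa>)) (snd (\<phi> \<kappa>)) r \<kappa>' \<omega>" for \<kappa> r \<kappa>'
    define R where "R \<kappa> = {1..E (\<phi> \<kappa>) \<omega>}" for \<kappa>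
    have P1: "u1 ^ INMA_field q1 q2 eps Z s t \<omega> = (\<Prod>\<kappa>\<in>D1. \<Prod>r\<in>R \<kappa>. u1 ^ ZZ \<kappa> r \<kappa>)"
      by (simp add: INMA_field_def thinning_def power_sum prod_cart D1_def \<phi>_def E_def ZZ_def R_def)
    define \<psi> where "\<psi> \<kappa> = (fst \<kappa> + k, snd \<kappa> + l)" for \<kappa> :: "nat \<times> nat"
    have inj\<psi>: "inj_on \<psi> D1" unfolding \<psi>_def inj_on_def by auto
    have D2\<psi>: "D2 = \<psi> ` D1"
    proof
      show "\<psi> ` D1 \<subseteq> D2" unfolding \<psi>_def D1_def D2_def by auto
      show "D2 \<subseteq> \<psi> ` D1"
      proof
        fix \<kappa> assume "\<kappa> \<in> D2"
        then have "\<kappa> = \<psi> (fst \<kappa> - k, snd \<kappa> - l)" "(fst \<kappa> - k, snd \<kappa> - l) \<in> D1"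
          unfolding \<psi>_def D1_def D2_def by auto
        then show "\<kappa> \<in> \<psi> ` D1" by (metis image_eqI)
      qed
    qed
    have P2: "u2 ^ INMA_field q1 q2 eps Z (s - int k) (t - int l) \<omega>
        = (\<Prod>\<kappa>\<in>D2. \<Prod>r\<in>R \<kappa>. u2 ^ ZZ \<kappa> r (fst \<kappa> - k, snd \<kappa> - l))"
    proof -
      have "u2 ^ INMA_field q1 q2 eps Z (s - int k) (t - int l) \<omega>
        = (\<Prod>\<kappa>\<in>D1. \<Prod>r\<in>R (\<psi> \<kappa>). u2 ^ ZZ (\<psi> \<kappa>) r \<kappa>)"
        by (simp add: INMA_field_def thinning_def power_sum prod_cart D1_def \<phi>_def \<psi>_def E_def ZZ_def R_def
             algebra_simps)
      also have "\<dots> = (\<Prod>\<kappa>\<in>D2. \<Prod>r\<in>R \<kappa>. u2 ^ ZZ \<kappa> r (fst \<kappa> - k, snd \<kappa> - l))"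
        unfolding D2\<psi> by (subst prod.reindex[OF inj\<psi>]) (simp add: \<psi>_def)
      finally show ?thesis .
    qed
    have ex: "(\<Prod>\<kappa>\<in>A. f \<kappa>) = (\<Prod>\<kappa>\<in>D. if \<kappa> \<in> A then f \<kappa> else 1)" if "A \<subseteq> D" for A and f :: "nat \<times> nat \<Rightarrow> real"
      using prod.inter_restrict[OF finD, of f A] that by (simp add: Int_absorb1)
    have "u1 ^ INMA_field q1 q2 eps Z s t \<omega> * u2 ^ INMA_field q1 q2 eps Z (s - int k) (t - int l) \<omega>
       = (\<Prod>\<kappa>\<in>D. (if \<kappa> \<in> D1 then \<Prod>r\<in>R \<kappa>. u1 ^ ZZ \<kappa> r \<kappa> else 1)
              * (if \<kappa> \<in> D2 then \<Prod>r\<in>R \<kappa>. u2 ^ ZZ \<kappa> r (fst \<kappa> - k, snd \<kappa> - l) else 1))"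
      unfolding P1 P2 prod.distrib by (subst (1 2) ex) (auto simp: D_def)
    also have "\<dots> = (\<Prod>\<kappa>\<in>D. \<Prod>r\<in>R \<kappa>. Y (\<phi> \<kappa>) r \<omega>)"
    proof (rule prod.cong[OF refl])
      fix \<kappa> assume "\<kappa> \<in> D"
      have "Y (\<phi> \<kappa>) r \<omega> = (if \<kappa> \<in> D1 then u1 ^ ZZ \<kappa> r \<kappa> else 1) * (if \<kappa> \<in> D2 then u2 ^ ZZ \<kappa> r (fst \<kappa> - k, snd \<kappa> - l) else 1)" for r
        by (auto simp: Y_def gg_def Zvec_def ZZ_def D1_def D2_def)
      then show "(if \<kappa> \<in> D1 then \<Prod>r\<in>R \<kappa>. u1 ^ ZZ \<kappa> r \<kappa> else 1)
              * (if \<kappa> \<in> D2 then \<Prod>r\<in>R \<kappa>. u2 ^ ZZ \<kappa> r (fst \<kappa> - k, snd \<kappa> - l) else 1)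
           = (\<Prod>r\<in>R \<kappa>. Y (\<phi> \<kappa>) r \<omega>)"
        by (simp add: prod.distrib)
    qed
    also have "\<dots> = (\<Prod>\<sigma>\<in>\<phi> ` D. \<Prod>r\<in>{1..E \<sigma> \<omega>}. Y \<sigma> r \<omega>)"
      by (subst prod.reindex[OF inj\<phi>]) (simp add: R_def)
    finally show ?thesis .
  qed
  have Yint: "(\<integral>\<omega>. Y \<sigma> r \<omega> \<partial>M) = c \<sigma>" if \<sigma>: "\<sigma> \<in> \<phi> ` D" and r: "r \<ge> 1" for \<sigma> r
  proof -
    obtain i j where ijD: "(i, j) \<in> D" and \<sigma>\<phi>: "\<sigma> = \<phi> (i, j)" using \<sigma> by auto
    define a where "a = fst \<sigma>"
    define b where "b = snd \<sigma>"
    define A1 where "A1 = {\<omega> \<in> space M. Z a b r (i, j) \<omega> = 1}"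
    define A2 where "A2 = {\<omega> \<in> space M. Z a b r (i - k, j - l) \<omega> = 1}"
    define x1 where "x1 = (if (i, j) \<in> D1 then u1 - 1 else 0)"
    define x2 where "x2 = (if (i, j) \<in> D2 then u2 - 1 else 0)"
    have A1ev: "A1 \<in> sets M" unfolding A1_def by measurable
    have A2ev: "A2 \<in> sets M" unfolding A2_def by measurable
    have pw: "Y \<sigma> r \<omega> = 1 + x1 * indicator A1 \<omega> + x2 * indicator A2 \<omega> + x1 * x2 * indicator (A1 \<inter> A2) \<omega>"
      if \<omega>: "\<omega> \<in> space M" for \<omega>
    proof -
      have Yeq: "Y \<sigma> r \<omega> = (if (i, j) \<in> D1 then u1 ^ Z a b r (i, j) \<omega> else 1)
          * (if (i, j) \<in> D2 then u2 ^ Z a b r (i - k, j - l) \<omega> else 1)"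
        by (auto simp: Y_def gg_def Zvec_def D1_def D2_def a_def b_def \<sigma>\<phi>)
      have f1: "(if (i, j) \<in> D1 then u1 ^ Z a b r (i, j) \<omega> else 1) = 1 + x1 * indicator A1 \<omega>"
      proof (cases "(i, j) \<in> D1")
        case True
        then have "Z a b r (i, j) \<omega> \<in> {0, 1}" using Z_01[OF \<omega>] unfolding D1_def by auto
        then show ?thesis using True \<omega> by (auto simp: x1_def A1_def)
      qed (simp add: x1_def)
      have f2: "(if (i, j) \<in> D2 then u2 ^ Z a b r (i - k, j - l) \<omega> else 1) = 1 + x2 * indicator A2 \<omega>"
      proof (cases "(i, j) \<in> D2")
        case True
        then have "i - k \<le> q1" "j - l \<le> q2" unfolding D2_def by auto
        then have "Z a b r (i - k, j - l) \<omega> \<in> {0, 1}" using Z_01[OF \<omega>] by blast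
        then show ?thesis using True \<omega> by (auto simp: x2_def A2_def)
      qed (simp add: x2_def)
      show ?thesis unfolding Yeq f1 f2 by (simp add: algebra_simps indicator_inter_arith)
    qed
    have "(\<integral>\<omega>. Y \<sigma> r \<omega> \<partial>M) = (\<integral>\<omega>. 1 + x1 * indicator A1 \<omega> + x2 * indicator A2 \<omega> + x1 * x2 * indicator (A1 \<inter> A2) \<omega> \<partial>M)"
      by (rule Bochner_Integration.integral_cong) (auto simp: pw)
    also have "\<dots> = 1 + x1 * measure M A1 + x2 * measure M A2 + x1 * x2 * measure M (A1 \<inter> A2)"
    proof -
      have iA: "integrable M (\<lambda>\<omega>. x * indicator A \<omega> :: real)" if "A \<in> sets M" for A x
        using that by (intro integrable_mult_right integrable_real_indicator) (auto simp: less_top[symmetric])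
      have ev12: "A1 \<inter> A2 \<in> sets M" using A1ev A2ev by auto
      show ?thesis
        using iA[OF A1ev] iA[OF A2ev] iA[OF ev12] A1ev A2ev ev12
        by (simp add: Bochner_Integration.integral_add Bochner_Integration.integrable_add prob_space)
    qed
    also have "\<dots> = c \<sigma>"
    proof -
      have m1: "measure M A1 = beta i j" if "(i, j) \<in> D1"
        using Z_bern[OF r, of i j a b] that unfolding A1_def D1_def by auto
      have m2: "measure M A2 = beta (i - k) (j - l)" if "(i, j) \<in> D2"
        using Z_bern[OF r, of "i - k" "j - l" a b] that unfolding A2_def D2_def by auto
      have m12: "measure M (A1 \<inter> A2) = pp i j (i - k) (j - l)" if "(i, j) \<in> D1" "(i, j) \<in> D2"
      proof -
        define BB where "BB = {f :: nat \<times> nat \<Rightarrow> nat. f (i, j) = 1 \<and> f (i - k, j - l) = 1}"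
        have "A1 \<inter> A2 = {\<omega> \<in> space M. Zvec q1 q2 Z a b r \<omega> \<in> BB}"
          using that unfolding A1_def A2_def BB_def Zvec_def D1_def D2_def by auto
        moreover have "{\<omega> \<in> space M. Zvec q1 q2 Z 0 0 1 \<omega> \<in> BB}
            = {\<omega> \<in> space M. Z 0 0 1 (i, j) \<omega> = 1 \<and> Z 0 0 1 (i - k, j - l) \<omega> = 1}"
          using that unfolding BB_def Zvec_def D1_def D2_def by auto
        ultimately show ?thesis using Z_ident[OF r, of a b BB] unfolding pp_def by simp
      qed
      show ?thesis
        unfolding c_def \<sigma>\<phi> Gi_\<phi> ccf_def D1_def[symmetric] D2_def[symmetric]
        using m1 m2 m12 ijD unfolding x1_def x2_def D_def
        by (auto simp: algebra_simps)
    qed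
    finally show ?thesis .
  qed
  have main: "(\<integral>\<omega>. (\<Prod>\<sigma>\<in>\<phi> ` D. \<Prod>r\<in>{1..E \<sigma> \<omega>}. Y \<sigma> r \<omega>) \<partial>M) = (\<Prod>\<sigma>\<in>\<phi> ` D. \<integral>\<omega>. c \<sigma> ^ eps 0 0 \<omega> \<partial>M)"
  proof (rule L2[where G="INMA_sigmas M q1 q2 eps Z"])
    show "indep_sets (INMA_sigmas M q1 q2 eps Z) (range Inl \<union> Inr ` {(a, b, r). r \<ge> 1})"
      using indep .
    show "finite (\<phi> ` D)" using finD by simp
    show "E \<sigma> \<in> measurable M (count_space UNIV)" for \<sigma> unfolding E_def by (rule eps_meas)
    show "E \<sigma> -` A \<inter> space M \<in> INMA_sigmas M q1 q2 eps Z (Inl \<sigma>)" for \<sigma> A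
      by (cases \<sigma>) (auto simp: INMA_sigmas_def E_def)
    show "Y \<sigma> r \<in> borel_measurable M" if "r \<ge> 1" for \<sigma> r
    proof -
      have "Y \<sigma> r = (\<lambda>\<omega>. (if Gi \<sigma> \<in> D1 then u1 ^ Z (fst \<sigma>) (snd \<sigma>) r (Gi \<sigma>) \<omega> else 1)
          * (if Gi \<sigma> \<in> D2 then u2 ^ Z (fst \<sigma>) (snd \<sigma>) r (fst (Gi \<sigma>) - k, snd (Gi \<sigma>) - l) \<omega> else 1))"
        by (auto simp: Y_def gg_def Zvec_def D1_def D2_def fun_eq_iff)
      then show ?thesis by simp
    qed
    show "Y \<sigma> r -` B \<inter> space M \<in> INMA_sigmas M q1 q2 eps Z (Inr (fst \<sigma>, snd \<sigma>, r))" if "r \<ge> 1" for \<sigma> r B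
    proof -
      have "Y \<sigma> r -` B \<inter> space M = Zvec q1 q2 Z (fst \<sigma>) (snd \<sigma>) r -` (gg (Gi \<sigma>) -` B) \<inter> space M"
        by (auto simp: Y_def)
      then show ?thesis by (auto simp: INMA_sigmas_def)
    qed
    show "\<bar>Y \<sigma> r \<omega>\<bar> \<le> 1" if "\<omega> \<in> space M" for \<sigma> r \<omega>
      using u by (auto simp: Y_def gg_def abs_mult power_abs intro!: mult_le_one power_le_one)
    show "(\<integral>\<omega>. Y \<sigma> r \<omega> \<partial>M) = c \<sigma>" if "\<sigma> \<in> \<phi> ` D" "r \<ge> 1" for \<sigma> r
      using Yint that .
    show "eps 0 0 \<in> measurable M (count_space UNIV)" by (rule eps_meas)
    show "prob {\<omega> \<in> space M. E \<sigma> \<omega> = m} = prob {\<omega> \<in> space M. eps 0 0 \<omega> = m}" for \<sigma> m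
      using eps_ident[of "fst \<sigma>" "snd \<sigma>" "{m}"] by (simp add: E_def)
  qed
  have "(\<integral>\<omega>. u1 ^ INMA_field q1 q2 eps Z s t \<omega>
               * u2 ^ INMA_field q1 q2 eps Z (s - int k) (t - int l) \<omega> \<partial>M)
      = (\<Prod>\<sigma>\<in>\<phi> ` D. pgf M (eps 0 0) (c \<sigma>))"
    unfolding main[symmetric] pgf_def by (rule Bochner_Integration.integral_cong) (auto simp: LHS)
  also have "\<dots> = (\<Prod>\<kappa>\<in>D. pgf M (eps 0 0) (ccf q1 q2 k l beta pp u1 u2 \<kappa>))"
    by (subst prod.reindex[OF inj\<phi>]) (simp add: c_def)
  also have "\<dots> = (\<Prod>\<kappa>\<in>({..q1} \<times> {..q2}) \<union> ({k..q1+k} \<times> {l..q2+l}). pgf M (eps 0 0) (ccf q1 q2 k l beta pp u1 u2 \<kappa>))"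
    by (simp add: D_def D1_def D2_def)
  finally show ?thesis unfolding Let_def final_prod[OF kl] pp_def .
qed

end
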